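(* Let $\mathcal{C}$ be a prevariety over a finite alphabet $A$ and let $\alpha:A^*\to M$ be a morphism into a finite monoid. If $(s_1,t_1),(s_2,t_2)\in M^2$ are $\mathcal{C}$-pairs for $\alpha$, then $(s_1s_2,t_1t_2)$ is a $\mathcal{C}$-pair for $\alpha$.
   Context: Fix a finite alphabet $A$. A prevariety is a class of regular languages over $A$ containing $\emptyset$ and $A^*$, closed under union, intersection, complement, and under the quotients $u^{-1}L=\{w\mid uw\in L\}$ and $Lu^{-1}=\{w\mid wu\in L\}$. A language $L_1$ is $\mathcal{C}$-separable from $L_2$ if some $K\in\mathcal{C}$ satisfies $L_1\subseteq K$ and $K\cap L_2=\emptyset$. For a morphism $\alpha:A^*\to M$, a pair $(s,t)\in M^2$ is a $\mathcal{C}$-pair for $\alpha$ if $\alpha^{-1}(s)$ is not $\mathcal{C}$-separable from $\alpha^{-1}(t)$. *)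

theory Defs
  imports Main
begin

definition regular_lang :: "'a list set \<Rightarrow> bool" where
  "regular_lang L \<longleftrightarrow>
     (\<exists>(Q::nat set) q0 (\<delta>::nat \<Rightarrow> 'a \<Rightarrow> nat) F.
        finite Q \<and> q0 \<in> Q \<and> F \<subseteq> Q \<and> (\<forall>q\<in>Q. \<forall>a. \<delta> q a \<in> Q) \<and>
        L = {w. foldl \<delta> q0 w \<in> F})"

definition left_quot :: "'a list \<Rightarrow> 'a list set \<Rightarrow> 'a list set" where
  "left_quot u L = {w. u @ w \<in> L}"

definition right_quot :: "'a list set \<Rightarrow> 'a list \<Rightarrow> 'a list set" where
  "right_quot L u = {w. w @ u \<in> L}"

definition prevariety :: "'a list set set \<Rightarrow> bool" where
  "prevariety C \<longleftrightarrow>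
     (\<forall>L\<in>C. regular_lang L) \<and> {} \<in> C \<and> UNIV \<in> C \<and>
     (\<forall>K\<in>C. \<forall>L\<in>C. K \<union> L \<in> C) \<and>
     (\<forall>K\<in>C. \<forall>L\<in>C. K \<inter> L \<in> C) \<and>
     (\<forall>L\<in>C. - L \<in> C) \<and>
     (\<forall>L\<in>C. \<forall>u. left_quot u L \<in> C \<and> right_quot L u \<in> C)"

definition separable :: "'a list set set \<Rightarrow> 'a list set \<Rightarrow> 'a list set \<Rightarrow> bool" where
  "separable C L1 L2 \<longleftrightarrow> (\<exists>K\<in>C. L1 \<subseteq> K \<and> K \<inter> L2 = {})"

definition monoid_morphism :: "('a list \<Rightarrow> 'm::monoid_mult) \<Rightarrow> bool" where
  "monoid_morphism \<alpha> \<longleftrightarrow> \<alpha> [] = 1 \<and> (\<forall>u v. \<alpha> (u @ v) = \<alpha> u * \<alpha> v)"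

definition C_pair :: "'a list set set \<Rightarrow> ('a list \<Rightarrow> 'm::monoid_mult) \<Rightarrow> 'm \<Rightarrow> 'm \<Rightarrow> bool" where
  "C_pair C \<alpha> s t \<longleftrightarrow> \<not> separable C (\<alpha> -` {s}) (\<alpha> -` {t})"

end

theory Submission
  imports Defs
begin

lemma inter_in_C:
  assumes "prevariety C" "finite F" "F \<subseteq> C"
  shows "\<Inter>F \<in> C"
  using assms(2,3)
proof (induction F rule: finite_induct)
  case empty
  then show ?case using assms(1) by (simp add: prevariety_def)
next
  case (insert x F)
  then show ?case using assms(1) unfolding prevariety_def by auto
qed

lemma finite_left_quots:
  assumes "regular_lang K"
  shows "finite {left_quot u K | u. True}"
proof -
  obtain Q :: "nat set" and q0 \<delta> F where h: "finite Q" "q0 \<in> Q" "F \<subseteq> Q"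
    "\<forall>q\<in>Q. \<forall>a. \<delta> q a \<in> Q" "K = {w. foldl \<delta> q0 w \<in> F}"
    using assms unfolding regular_lang_def by blast
  have inQ: "foldl \<delta> q u \<in> Q" if "q \<in> Q" for q u
    using that h(4) by (induction u arbitrary: q) auto
  have "{left_quot u K | u. True} \<subseteq> (\<lambda>q. {w. foldl \<delta> q w \<in> F}) ` Q"
  proof
    fix L assume "L \<in> {left_quot u K | u. True}"
    then obtain u where "L = left_quot u K" by blast
    then have "L = {w. foldl \<delta> (foldl \<delta> q0 u) w \<in> F}"
      using h(5) by (simp add: left_quot_def)
    then show "L \<in> (\<lambda>q. {w. foldl \<delta> q w \<in> F}) ` Q" using inQ[OF h(2)] by blast
  qed
  then show ?thesis using h(1) finite_subset by blast
qed

theorem lemma5p4: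
  fixes C :: "('a::finite) list set set"
    and \<alpha> :: "'a list \<Rightarrow> 'm::{monoid_mult, finite}"
  assumes "prevariety C"
    and "monoid_morphism \<alpha>"
    and "C_pair C \<alpha> s1 t1"
    and "C_pair C \<alpha> s2 t2"
  shows "C_pair C \<alpha> (s1 * s2) (t1 * t2)"
proof (rule ccontr)
  assume "\<not> C_pair C \<alpha> (s1 * s2) (t1 * t2)"
  then obtain K where K: "K \<in> C" "\<alpha> -` {s1 * s2} \<subseteq> K" "K \<inter> \<alpha> -` {t1 * t2} = {}"
    unfolding C_pair_def separable_def by blast
  have mor: "\<alpha> (u @ v) = \<alpha> u * \<alpha> v" for u v
    using assms(2) by (simp add: monoid_morphism_def)
  define H where "H = \<Inter>{left_quot u K | u. \<alpha> u = s1}"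
  have "regular_lang K" using assms(1) K(1) by (simp add: prevariety_def)
  then have fin: "finite {left_quot u K | u. \<alpha> u = s1}"
    by (rule rev_finite_subset[OF finite_left_quots]) blast
  have "{left_quot u K | u. \<alpha> u = s1} \<subseteq> C"
    using assms(1) K(1) unfolding prevariety_def by blast
  then have HC: "H \<in> C" using inter_in_C[OF assms(1) fin] H_def by simp
  have "\<alpha> -` {s2} \<subseteq> H"
    using K(2) mor unfolding H_def left_quot_def by auto
  then obtain w2 where w2: "\<alpha> w2 = t2" "w2 \<in> H"
    using assms(4) HC unfolding C_pair_def separable_def by blast
  define K2 where "K2 = right_quot K w2"
  have K2C: "K2 \<in> C" using assms(1) K(1) unfolding prevariety_def K2_def by blast
  have "\<alpha> -` {s1} \<subseteq> K2"
    using w2(2) unfolding H_def K2_def left_quot_def right_quot_def by auto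
  then obtain w1 where w1: "\<alpha> w1 = t1" "w1 \<in> K2"
    using assms(3) K2C unfolding C_pair_def separable_def by blast
  have "w1 @ w2 \<in> K" using w1(2) unfolding K2_def right_quot_def by simp
  moreover have "\<alpha> (w1 @ w2) = t1 * t2" using mor w1 w2 by simp
  ultimately show False using K(3) by blast
qed

end
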